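(* For every integer $n\ge 1$, $\chi_\rho(X_n)=3$ and $\chi_\rho(Y_n)=3$.
   Context: All graphs are finite and simple; $d(u,v)$ is the shortest-path distance. A $k$-packing coloring of $G$ is a map $c:V(G)\to\{1,\dots,k\}$ such that whenever $u\neq v$ and $c(u)=c(v)=i$, we have $d(u,v)>i$. $\chi_\rho(G)$ is the least $k$ such that $G$ has a $k$-packing coloring. $P_n$ is the path on $n$ vertices. $X_n$ is obtained from the disjoint union of $K_3$ and $P_n$ by adding an edge joining a vertex of $K_3$ to an end vertex of $P_n$ (the unique vertex if $n=1$). $Y_n$ is obtained from the disjoint union of $C_4$ and $P_n$ by adding an edge joining a vertex of $C_4$ to an end vertex of $P_n$ (the unique vertex if $n=1$). *)

theory Defs
  imports Main
begin

text \<open>A finite simple graph is given by a vertex set V and a symmetric,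
irreflexive edge predicate E.\<close>

definition is_walk :: "('a \<Rightarrow> 'a \<Rightarrow> bool) \<Rightarrow> 'a set \<Rightarrow> 'a list \<Rightarrow> bool" where
  "is_walk E V xs \<longleftrightarrow> xs \<noteq> [] \<and> set xs \<subseteq> V \<and>
     (\<forall>i. Suc i < length xs \<longrightarrow> E (xs ! i) (xs ! Suc i))"

definition gdist :: "'a set \<Rightarrow> ('a \<Rightarrow> 'a \<Rightarrow> bool) \<Rightarrow> 'a \<Rightarrow> 'a \<Rightarrow> nat" where
  "gdist V E u v = (LEAST k. \<exists>xs. is_walk E V xs \<and> hd xs = u \<and> last xs = v \<and> length xs = Suc k)"

definition packing_coloring ::
  "'a set \<Rightarrow> ('a \<Rightarrow> 'a \<Rightarrow> bool) \<Rightarrow> nat \<Rightarrow> ('a \<Rightarrow> nat) \<Rightarrow> bool" where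
  "packing_coloring V E k c \<longleftrightarrow>
     (\<forall>v\<in>V. c v \<in> {1..k}) \<and>
     (\<forall>u\<in>V. \<forall>v\<in>V. u \<noteq> v \<and> c u = c v \<longrightarrow> gdist V E u v > c u)"

definition packing_chromatic :: "'a set \<Rightarrow> ('a \<Rightarrow> 'a \<Rightarrow> bool) \<Rightarrow> nat" where
  "packing_chromatic V E = (LEAST k. \<exists>c. packing_coloring V E k c)"

text \<open>X_n: triangle on 0,1,2; path 3,4,...,n+2; edge {0,3}.\<close>
definition X_verts :: "nat \<Rightarrow> nat set" where
  "X_verts n = {0..<n+3}"

definition X_edge0 :: "nat \<Rightarrow> nat \<Rightarrow> nat \<Rightarrow> bool" where
  "X_edge0 n a b \<longleftrightarrow> (a = 0 \<and> b = 1) \<or> (a = 1 \<and> b = 2) \<or> (a = 0 \<and> b = 2)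
      \<or> (a = 0 \<and> b = 3) \<or> (3 \<le> a \<and> b = a + 1 \<and> b < n + 3)"

definition X_edge :: "nat \<Rightarrow> nat \<Rightarrow> nat \<Rightarrow> bool" where
  "X_edge n a b \<longleftrightarrow> X_edge0 n a b \<or> X_edge0 n b a"

text \<open>Y_n: 4-cycle 0-1-2-3-0; path 4,5,...,n+3; edge {0,4}.\<close>
definition Y_verts :: "nat \<Rightarrow> nat set" where
  "Y_verts n = {0..<n+4}"

definition Y_edge0 :: "nat \<Rightarrow> nat \<Rightarrow> nat \<Rightarrow> bool" where
  "Y_edge0 n a b \<longleftrightarrow> (a = 0 \<and> b = 1) \<or> (a = 1 \<and> b = 2) \<or> (a = 2 \<and> b = 3)
      \<or> (a = 0 \<and> b = 3) \<or> (a = 0 \<and> b = 4) \<or> (4 \<le> a \<and> b = a + 1 \<and> b < n + 4)"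

definition Y_edge :: "nat \<Rightarrow> nat \<Rightarrow> nat \<Rightarrow> bool" where
  "Y_edge n a b \<longleftrightarrow> Y_edge0 n a b \<or> Y_edge0 n b a"

end

theory Submission
  imports Defs
begin

lemma walk_Nil[simp]: "\<not> is_walk E V []"
  by (simp add: is_walk_def)

lemma walk_single[simp]: "is_walk E V [a] \<longleftrightarrow> a \<in> V"
  by (simp add: is_walk_def)

lemma walk_cons2[simp]: "is_walk E V (a # b # xs) \<longleftrightarrow> a \<in> V \<and> E a b \<and> is_walk E V (b # xs)"
proof
  assume h: "is_walk E V (a # b # xs)"
  have all: "\<forall>i. Suc i < length (a#b#xs) \<longrightarrow> E ((a#b#xs) ! i) ((a#b#xs) ! Suc i)"
    and st: "set (a#b#xs) \<subseteq> V" using h unfolding is_walk_def by blast+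
  have "Suc 0 < length (a#b#xs)" by simp
  then have "E ((a#b#xs) ! 0) ((a#b#xs) ! Suc 0)" using all by blast
  then have "E a b" by simp
  moreover have "\<forall>i. Suc i < length (b#xs) \<longrightarrow> E ((b#xs) ! i) ((b#xs) ! Suc i)"
  proof (intro allI impI)
    fix i assume "Suc i < length (b#xs)"
    then have "Suc (Suc i) < length (a#b#xs)" by simp
    then have "E ((a#b#xs) ! Suc i) ((a#b#xs) ! Suc (Suc i))" using all by blast
    then show "E ((b#xs) ! i) ((b#xs) ! Suc i)" by (simp only: nth_Cons_Suc)
  qed
  ultimately show "a \<in> V \<and> E a b \<and> is_walk E V (b # xs)" using st unfolding is_walk_def by simp
next
  assume h: "a \<in> V \<and> E a b \<and> is_walk E V (b # xs)"
  have all: "\<forall>i. Suc i < length (b#xs) \<longrightarrow> E ((b#xs) ! i) ((b#xs) ! Suc i)"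
    and st: "set (b#xs) \<subseteq> V" using h unfolding is_walk_def by blast+
  show "is_walk E V (a # b # xs)" unfolding is_walk_def
  proof (intro conjI allI impI)
    show "set (a # b # xs) \<subseteq> V" using h st by simp
    fix i assume i: "Suc i < length (a # b # xs)"
    show "E ((a # b # xs) ! i) ((a # b # xs) ! Suc i)"
    proof (cases i)
      case 0 then show ?thesis using h by simp
    next
      case (Suc j)
      then have "Suc j < length (b#xs)" using i by simp
      then have "E ((b#xs) ! j) ((b#xs) ! Suc j)" using all by blast
      then show ?thesis unfolding Suc by (simp only: nth_Cons_Suc)
    qed
  qed simp
qed

lemma walk_append:
  "is_walk E V xs \<Longrightarrow> is_walk E V ys \<Longrightarrow> last xs = hd ys \<Longrightarrow>
   is_walk E V (xs @ tl ys) \<and> hd (xs @ tl ys) = hd xs \<and> last (xs @ tl ys) = last ys"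
proof (induction xs rule: induct_list012)
  case 1 then show ?case by simp
next
  case (2 a) then show ?case by (cases ys) auto
next
  case (3 a b zs)
  have w: "a \<in> V" "E a b" "is_walk E V (b # zs)" using "3.prems"(1) by simp_all
  have lst: "last (b # zs) = hd ys" using "3.prems"(3) by simp
  have IH: "is_walk E V ((b # zs) @ tl ys) \<and> hd ((b # zs) @ tl ys) = hd (b # zs) \<and> last ((b # zs) @ tl ys) = last ys"
    by (rule "3.IH"(2)[OF w(3) "3.prems"(2) lst])
  have eq: "(a # b # zs) @ tl ys = a # ((b # zs) @ tl ys)" "(b # zs) @ tl ys = b # (zs @ tl ys)" by simp_all
  have W: "is_walk E V (a # b # (zs @ tl ys))" using IH w unfolding eq walk_cons2 by blast
  have L1: "last (a # b # (zs @ tl ys)) = last (b # (zs @ tl ys))" by (simp only: last.simps list.simps(3) if_False)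
  have L2: "last (b # (zs @ tl ys)) = last ys" using IH unfolding eq by blast
  have L: "last (a # b # (zs @ tl ys)) = last ys" using trans[OF L1 L2] .
  show ?case unfolding eq list.sel(1) using W L by blast
qed

definition conn :: "'a set \<Rightarrow> ('a \<Rightarrow> 'a \<Rightarrow> bool) \<Rightarrow> 'a \<Rightarrow> 'a \<Rightarrow> bool" where
  "conn V E u v \<longleftrightarrow> (\<exists>xs. is_walk E V xs \<and> hd xs = u \<and> last xs = v)"

lemma conn_refl: "u \<in> V \<Longrightarrow> conn V E u u"
  unfolding conn_def by (rule exI[of _ "[u]"]) simp

lemma conn_edge: "u \<in> V \<Longrightarrow> v \<in> V \<Longrightarrow> E u v \<Longrightarrow> conn V E u v"
  unfolding conn_def by (rule exI[of _ "[u,v]"]) simp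

lemma conn_trans: assumes "conn V E u v" "conn V E v w" shows "conn V E u w"
proof -
  obtain xs where xs: "is_walk E V xs" "hd xs = u" "last xs = v" using assms(1) unfolding conn_def by blast
  obtain ys where ys: "is_walk E V ys" "hd ys = v" "last ys = w" using assms(2) unfolding conn_def by blast
  have "last xs = hd ys" using xs(3) ys(2) by simp
  from walk_append[OF xs(1) ys(1) this] xs(2) ys(3) show ?thesis unfolding conn_def by blast
qed

lemma lip_walk:
  assumes "\<And>a b. a \<in> V \<Longrightarrow> b \<in> V \<Longrightarrow> E a b \<Longrightarrow> \<bar>f a - f b\<bar> \<le> (1::int)"
  shows "is_walk E V xs \<Longrightarrow> \<bar>f (hd xs) - f (last xs)\<bar> \<le> int (length xs) - 1"
proof (induction xs rule: induct_list012)
  case 1 then show ?case by simp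
next
  case (2 a) then show ?case by simp
next
  case (3 a b zs)
  have w: "a \<in> V" "E a b" "is_walk E V (b # zs)" using "3.prems" by simp_all
  have h: "\<bar>f b - f (last (b#zs))\<bar> \<le> int (length (b#zs)) - 1" using "3.IH"(2)[OF w(3)] by simp
  have "b \<in> V" using w(3) by (simp add: is_walk_def)
  have ab: "\<bar>f a - f b\<bar> \<le> 1" using assms w(1,2) \<open>b \<in> V\<close> by blast
  have l: "last (a#b#zs) = last (b#zs)" "hd (a#b#zs) = a" by simp_all
  have n: "int (length (a#b#zs)) - 1 = int (length (b#zs))" by simp
  have "\<bar>f a - f (last (b#zs))\<bar> \<le> int (length (b#zs))" using h ab by linarith
  then show ?case unfolding l n .
qed

lemma gdist_ge:
  assumes "conn V E u v"
    and "\<And>a b. a \<in> V \<Longrightarrow> b \<in> V \<Longrightarrow> E a b \<Longrightarrow> \<bar>f a - f b\<bar> \<le> (1::int)"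
  shows "\<bar>f u - f v\<bar> \<le> int (gdist V E u v)"
proof -
  let ?P = "\<lambda>k. \<exists>xs. is_walk E V xs \<and> hd xs = u \<and> last xs = v \<and> length xs = Suc k"
  obtain xs where "is_walk E V xs" "hd xs = u" "last xs = v" using assms(1) unfolding conn_def by blast
  then have "?P (length xs - 1)" by (intro exI[of _ xs]) (cases xs, auto)
  then have "?P (gdist V E u v)" unfolding gdist_def by (rule LeastI)
  then obtain ys where ys: "is_walk E V ys" "hd ys = u" "last ys = v" "length ys = Suc (gdist V E u v)" by blast
  have "\<bar>f (hd ys) - f (last ys)\<bar> \<le> int (length ys) - 1" by (rule lip_walk[OF assms(2) ys(1)])
  then show ?thesis using ys(2-4) by simp
qed

lemma gdist_le_edge:
  assumes "u \<in> V" "v \<in> V" "E u v"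
  shows "gdist V E u v \<le> 1"
  unfolding gdist_def by (rule Least_le) (rule exI[of _ "[u,v]"], simp add: assms)

lemma gdist_le_2:
  assumes "u \<in> V" "v \<in> V" "w \<in> V" "E u w" "E w v"
  shows "gdist V E u v \<le> 2"
  unfolding gdist_def by (rule Least_le) (rule exI[of _ "[u,w,v]"], simp add: assms)

lemma adj_diff:
  assumes "packing_coloring V E k c" "u \<in> V" "v \<in> V" "E u v" "u \<noteq> v"
  shows "c u \<noteq> c v"
proof
  assume "c u = c v"
  then have "gdist V E u v > c u" using assms unfolding packing_coloring_def by blast
  moreover have "c u \<ge> 1" using assms unfolding packing_coloring_def by auto
  ultimately show False using gdist_le_edge[of u V v E, OF assms(2-4)] by simp
qed

lemma dist2_col:
  assumes "packing_coloring V E k c" "u \<in> V" "v \<in> V" "w \<in> V" "E u w" "E w v" "u \<noteq> v" "c u = c v"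
  shows "c u = 1"
proof -
  have "gdist V E u v > c u" using assms unfolding packing_coloring_def by blast
  moreover have "c u \<ge> 1" using assms unfolding packing_coloring_def by auto
  ultimately show ?thesis using gdist_le_2[of u V v w E, OF assms(2-6)] by simp
qed


lemma L1: fixes a b :: nat assumes "a mod 2 = 0" "b mod 2 = 0" "a < b" shows "a + 2 \<le> b"
proof -
  have e: "a = 2 * (a div 2)" "b = 2 * (b div 2)" using assms(1,2) by auto
  then have "a div 2 < b div 2" using assms(3) by linarith
  then have "a div 2 + 1 \<le> b div 2" by simp
  then show ?thesis using e by linarith
qed
lemma L2: fixes a b :: nat assumes "a mod 4 = b mod 4" "a < b" shows "a + 4 \<le> b"
proof -
  have "a = 4 * (a div 4) + a mod 4" "b = 4 * (b div 4) + b mod 4" by simp_all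
  then have "a div 4 < b div 4" using assms by linarith
  then have "a div 4 + 1 \<le> b div 4" by simp
  then show ?thesis using \<open>a = _\<close> \<open>b = _\<close> assms(1) by linarith
qed
definition colP :: "nat \<Rightarrow> nat" where
 "colP a = (if a mod 2 = 0 then 1 else if a mod 4 = 1 then 2 else 3)"
lemma colP_cases: "(colP a = 1 \<and> a mod 2 = 0) \<or> (colP a = 2 \<and> a mod 4 = 1) \<or> (colP a = 3 \<and> a mod 4 = 3)"
proof -
  have "a mod 4 < 4" by simp
  then have "a mod 4 = 0 \<or> a mod 4 = 1 \<or> a mod 4 = 2 \<or> a mod 4 = 3" by linarith
  moreover have "a mod 2 = (a mod 4) mod 2" by (simp add: mod_mod_cancel)
  ultimately show ?thesis unfolding colP_def by (elim disjE) simp_all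
qed
lemma colP_ok: assumes "a \<noteq> b" "colP a = colP b" shows "int (colP a) < \<bar>int a - int b\<bar>"
proof -
  have d: "a + 2 \<le> b \<or> b + 2 \<le> a" if "a mod 2 = 0" "b mod 2 = 0"
    using L1[of a b] L1[of b a] that assms(1) by linarith
  have d4: "a + 4 \<le> b \<or> b + 4 \<le> a" if "a mod 4 = b mod 4"
    using L2[of a b] L2[of b a] that assms(1) by linarith
  show ?thesis using colP_cases[of a] colP_cases[of b] assms(2) d d4 by auto
qed
lemma colP_3: "colP b = 3 \<Longrightarrow> b \<ge> 3"
  using colP_cases[of b] by (cases "b < 3") (auto simp: less_Suc_eq)
lemma colP_2: "colP b = 2 \<Longrightarrow> b \<ge> 1"
  using colP_cases[of b] by (cases b) auto

definition cX :: "nat \<Rightarrow> nat" where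
 "cX v = (if v=0 then 3 else if v=1 then 1 else if v=2 then 2 else colP (v-3))"
definition fX :: "nat \<Rightarrow> int" where
 "fX v = (if v=0 then 0 else if v \<le> 2 then -1 else int v - 2)"
definition cY :: "nat \<Rightarrow> nat" where
 "cY v = (if v=0 then 3 else if v=1 then 1 else if v=2 then 2 else if v = 3 then 1 else colP (v-4))"
definition fY :: "nat \<Rightarrow> int" where
 "fY v = (if v=0 then 0 else if v = 1 \<or> v = 3 then -1 else if v = 2 then -2 else int v - 3)"
definition gY :: "nat \<Rightarrow> int" where
 "gY v = (if v=1 then 0 else if v = 0 \<or> v = 2 then 1 else if v = 3 then 2 else int v - 2)"

lemma cX_mixed: assumes "u < 3" "3 \<le> v" "cX u = cX v" shows "int (cX u) < \<bar>fX u - fX v\<bar>"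
proof -
  obtain b where b: "v = 3 + b" using le_Suc_ex[OF assms(2)] by blast
  have cv: "cX v = colP b" and fv: "fX v = int b + 1" unfolding cX_def fX_def b by simp_all
  have "u = 0 \<or> u = 1 \<or> u = 2" using assms(1) by linarith
  then show ?thesis
  proof (elim disjE)
    assume u: "u = 0"
    then have "colP b = 3" using assms(3) cv by (simp add: cX_def)
    then have "b \<ge> 3" by (rule colP_3)
    then show ?thesis using u fv by (simp add: cX_def fX_def)
  next
    assume u: "u = 1"
    then show ?thesis using fv by (simp add: cX_def fX_def)
  next
    assume u: "u = 2"
    then have "colP b = 2" using assms(3) cv by (simp add: cX_def)
    then have "b \<ge> 1" by (rule colP_2)
    then show ?thesis using u fv by (simp add: cX_def fX_def)
  qed
qed

lemma cX_ok: assumes "u \<noteq> v" "cX u = cX v" shows "int (cX u) < \<bar>fX u - fX v\<bar>"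
proof (cases "u < 3")
  case u: True
  show ?thesis
  proof (cases "v < 3")
    case True
    have "u = 0 \<or> u = 1 \<or> u = 2" "v = 0 \<or> v = 1 \<or> v = 2" using u True by linarith+
    then show ?thesis using assms by (auto simp: cX_def)
  next
    case False then show ?thesis using cX_mixed[of u v] u assms by simp
  qed
next
  case u: False
  show ?thesis
  proof (cases "v < 3")
    case True
    then have "int (cX v) < \<bar>fX v - fX u\<bar>" using cX_mixed[of v u] u assms by simp
    then show ?thesis using assms(2) by (simp add: abs_minus_commute)
  next
    case False
    have "u - 3 \<noteq> v - 3" using u False assms(1) by linarith
    moreover have "colP (u - 3) = colP (v - 3)" using u False assms(2) by (simp add: cX_def)
    ultimately have "int (colP (u-3)) < \<bar>int (u-3) - int (v-3)\<bar>" by (rule colP_ok)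
    moreover have "int (u-3) - int (v-3) = fX u - fX v" using u False by (simp add: fX_def of_nat_diff)
    moreover have "cX u = colP (u-3)" using u by (simp add: cX_def)
    ultimately show ?thesis by simp
  qed
qed

lemma cY_mixed: assumes "u < 4" "4 \<le> v" "cY u = cY v" shows "int (cY u) < \<bar>fY u - fY v\<bar>"
proof -
  obtain b where b: "v = 4 + b" using le_Suc_ex[OF assms(2)] by blast
  have cv: "cY v = colP b" and fv: "fY v = int b + 1" unfolding cY_def fY_def b by simp_all
  have "u = 0 \<or> u = 1 \<or> u = 2 \<or> u = 3" using assms(1) by linarith
  then show ?thesis
  proof (elim disjE)
    assume u: "u = 0"
    then have "colP b = 3" using assms(3) cv by (simp add: cY_def)
    then have "b \<ge> 3" by (rule colP_3)
    then show ?thesis using u fv by (simp add: cY_def fY_def)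
  next
    assume u: "u = 1"
    then show ?thesis using fv by (simp add: cY_def fY_def)
  next
    assume u: "u = 2"
    then have "colP b = 2" using assms(3) cv by (simp add: cY_def)
    then have "b \<ge> 1" by (rule colP_2)
    then show ?thesis using u fv by (simp add: cY_def fY_def)
  next
    assume u: "u = 3"
    then show ?thesis using fv by (simp add: cY_def fY_def)
  qed
qed

lemma cY_ok: assumes "u \<noteq> v" "{u,v} \<noteq> {1,3}" "cY u = cY v" shows "int (cY u) < \<bar>fY u - fY v\<bar>"
proof (cases "u < 4")
  case u: True
  show ?thesis
  proof (cases "v < 4")
    case True
    have "u = 0 \<or> u = 1 \<or> u = 2 \<or> u = 3" "v = 0 \<or> v = 1 \<or> v = 2 \<or> v = 3" using u True by linarith+
    then show ?thesis using assms by (auto simp: cY_def)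
  next
    case False then show ?thesis using cY_mixed[of u v] u assms by simp
  qed
next
  case u: False
  show ?thesis
  proof (cases "v < 4")
    case True
    then have "int (cY v) < \<bar>fY v - fY u\<bar>" using cY_mixed[of v u] u assms by simp
    then show ?thesis using assms(3) by (simp add: abs_minus_commute)
  next
    case False
    have "u - 4 \<noteq> v - 4" using u False assms(1) by linarith
    moreover have "colP (u - 4) = colP (v - 4)" using u False assms(3) by (simp add: cY_def)
    ultimately have "int (colP (u-4)) < \<bar>int (u-4) - int (v-4)\<bar>" by (rule colP_ok)
    moreover have "int (u-4) - int (v-4) = fY u - fY v" using u False by (simp add: fY_def of_nat_diff)
    moreover have "cY u = colP (u-4)" using u by (simp add: cY_def)
    ultimately show ?thesis by simp
  qed
qed

lemma fX_lip: "X_edge n a b \<Longrightarrow> \<bar>fX a - fX b\<bar> \<le> 1"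
  unfolding X_edge_def X_edge0_def fX_def by auto
lemma fY_lip: "Y_edge n a b \<Longrightarrow> \<bar>fY a - fY b\<bar> \<le> 1"
  unfolding Y_edge_def Y_edge0_def fY_def by auto
lemma gY_lip: "Y_edge n a b \<Longrightarrow> \<bar>gY a - gY b\<bar> \<le> 1"
  unfolding Y_edge_def Y_edge0_def gY_def by auto

lemma X_conn0: "v \<in> X_verts n \<Longrightarrow> conn (X_verts n) (X_edge n) 0 v \<and> conn (X_verts n) (X_edge n) v 0"
proof -
  let ?V = "X_verts n" and ?E = "X_edge n"
  have ce: "conn ?V ?E a b" if "a < n+3" "b < n + 3" "?E a b" for a b
    using that by (intro conn_edge) (auto simp: X_verts_def)
  have path: "3 + k < n + 3 \<Longrightarrow> conn ?V ?E 0 (3+k) \<and> conn ?V ?E (3+k) 0" for k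
  proof (induction k)
    case 0 then show ?case
      by (intro conjI ce) (simp_all add: X_edge_def X_edge0_def)
  next
    case (Suc k)
    then have IH: "conn ?V ?E 0 (3+k) \<and> conn ?V ?E (3+k) 0" by simp
    have e1: "conn ?V ?E (3+k) (3 + Suc k)" using ce[of "3+k" "3 + Suc k"] Suc.prems
      by (simp add: X_edge_def X_edge0_def)
    have e2: "conn ?V ?E (3 + Suc k) (3+k)" using ce[of "3 + Suc k" "3+k"] Suc.prems
      by (simp add: X_edge_def X_edge0_def)
    show ?case using conn_trans[OF conjunct1[OF IH] e1] conn_trans[OF e2 conjunct2[OF IH]] by simp
  qed
  assume v: "v \<in> X_verts n"
  show ?thesis
  proof (cases "v < 3")
    case True
    then have "v = 0 \<or> v = 1 \<or> v = 2" by auto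
    moreover have "conn ?V ?E 0 0" by (rule conn_refl) (simp add: X_verts_def)
    moreover have "conn ?V ?E 0 1" "conn ?V ?E 1 0" "conn ?V ?E 0 2" "conn ?V ?E 2 0"
      using ce[of 0 1] ce[of 1 0] ce[of 0 2] ce[of 2 0] by (simp_all add: X_edge_def X_edge0_def)
    ultimately show ?thesis by blast
  next
    case False
    then obtain k where k: "v = 3 + k" using le_Suc_ex[of 3 v] by auto
    then have "3 + k < n + 3" using v by (simp add: X_verts_def)
    from path[OF this] show ?thesis unfolding k .
  qed
qed

lemma Y_conn0: "v \<in> Y_verts n \<Longrightarrow> conn (Y_verts n) (Y_edge n) 0 v \<and> conn (Y_verts n) (Y_edge n) v 0"
proof -
  let ?V = "Y_verts n" and ?E = "Y_edge n"
  have ce: "conn ?V ?E a b" if "a < n+4" "b < n + 4" "?E a b" for a b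
    using that by (intro conn_edge) (auto simp: Y_verts_def)
  have path: "4 + k < n + 4 \<Longrightarrow> conn ?V ?E 0 (4+k) \<and> conn ?V ?E (4+k) 0" for k
  proof (induction k)
    case 0 then show ?case
      by (intro conjI ce) (simp_all add: Y_edge_def Y_edge0_def)
  next
    case (Suc k)
    then have IH: "conn ?V ?E 0 (4+k) \<and> conn ?V ?E (4+k) 0" by simp
    have e1: "conn ?V ?E (4+k) (4 + Suc k)" using ce[of "4+k" "4 + Suc k"] Suc.prems
      by (simp add: Y_edge_def Y_edge0_def)
    have e2: "conn ?V ?E (4 + Suc k) (4+k)" using ce[of "4 + Suc k" "4+k"] Suc.prems
      by (simp add: Y_edge_def Y_edge0_def)
    show ?case using conn_trans[OF conjunct1[OF IH] e1] conn_trans[OF e2 conjunct2[OF IH]] by simp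
  qed
  assume v: "v \<in> Y_verts n"
  show ?thesis
  proof (cases "v < 4")
    case True
    then have "v = 0 \<or> v = 1 \<or> v = 2 \<or> v = 3" by auto
    moreover have "conn ?V ?E 0 0" by (rule conn_refl) (simp add: Y_verts_def)
    moreover have c: "conn ?V ?E 0 1" "conn ?V ?E 1 0" "conn ?V ?E 0 3" "conn ?V ?E 3 0"
       "conn ?V ?E 1 2" "conn ?V ?E 2 1"
      using ce[of 0 1] ce[of 1 0] ce[of 0 3] ce[of 3 0] ce[of 1 2] ce[of 2 1]
      by (simp_all add: Y_edge_def Y_edge0_def)
    moreover have "conn ?V ?E 0 2" "conn ?V ?E 2 0" using conn_trans[OF c(1) c(5)] conn_trans[OF c(6) c(2)] by auto
    ultimately show ?thesis by blast
  next
    case False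
    then obtain k where k: "v = 4 + k" using le_Suc_ex[of 4 v] by auto
    then have "4 + k < n + 4" using v by (simp add: Y_verts_def)
    from path[OF this] show ?thesis unfolding k .
  qed
qed
lemma X_col: "packing_coloring (X_verts n) (X_edge n) 3 cX"
  unfolding packing_coloring_def
proof (intro conjI ballI impI)
  fix v assume "v \<in> X_verts n" then show "cX v \<in> {1..3}" using colP_cases[of "v-3"] by (auto simp: cX_def)
next
  fix u v assume u: "u \<in> X_verts n" and v: "v \<in> X_verts n" and h: "u \<noteq> v \<and> cX u = cX v"
  have "conn (X_verts n) (X_edge n) u v" using conn_trans[OF conjunct2[OF X_conn0[OF u]] conjunct1[OF X_conn0[OF v]]] by blast
  then have g: "\<bar>fX u - fX v\<bar> \<le> int (gdist (X_verts n) (X_edge n) u v)"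
    by (rule gdist_ge) (rule fX_lip)
  have "int (cX u) < \<bar>fX u - fX v\<bar>" using h by (intro cX_ok) blast+
  with g have "int (cX u) < int (gdist (X_verts n) (X_edge n) u v)" by linarith
  then show "gdist (X_verts n) (X_edge n) u v > cX u" by (simp only: of_nat_less_iff)
qed

lemma Y_col: "packing_coloring (Y_verts n) (Y_edge n) 3 cY"
  unfolding packing_coloring_def
proof (intro conjI ballI impI)
  fix v assume "v \<in> Y_verts n" then show "cY v \<in> {1..3}" using colP_cases[of "v-4"] by (auto simp: cY_def)
next
  fix u v assume u: "u \<in> Y_verts n" and v: "v \<in> Y_verts n" and h: "u \<noteq> v \<and> cY u = cY v"
  have c: "conn (Y_verts n) (Y_edge n) u v" using conn_trans[OF conjunct2[OF Y_conn0[OF u]] conjunct1[OF Y_conn0[OF v]]] by blast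
  have "int (cY u) < int (gdist (Y_verts n) (Y_edge n) u v)"
  proof (cases "{u,v} = {1,3}")
    case True
    have g: "\<bar>gY u - gY v\<bar> \<le> int (gdist (Y_verts n) (Y_edge n) u v)"
      using c by (rule gdist_ge) (rule gY_lip)
    have "(u = 1 \<and> v = 3) \<or> (u = 3 \<and> v = 1)" using True h by (auto simp: doubleton_eq_iff)
    then have "cY u = 1" "\<bar>gY u - gY v\<bar> = 2" by (auto simp: cY_def gY_def)
    with g show ?thesis by linarith
  next
    case False
    have g: "\<bar>fY u - fY v\<bar> \<le> int (gdist (Y_verts n) (Y_edge n) u v)"
      using c by (rule gdist_ge) (rule fY_lip)
    have "int (cY u) < \<bar>fY u - fY v\<bar>" using h False by (intro cY_ok) blast+
    with g show ?thesis by linarith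
  qed
  then show "gdist (Y_verts n) (Y_edge n) u v > cY u" by (simp only: of_nat_less_iff)
qed

lemma X_low: assumes p: "packing_coloring (X_verts n) (X_edge n) k c" shows "3 \<le> k"
proof (rule ccontr)
  assume k: "\<not> 3 \<le> k"
  have V: "0 \<in> X_verts n" "1 \<in> X_verts n" "2 \<in> X_verts n" by (auto simp: X_verts_def)
  have E: "X_edge n 0 1" "X_edge n 1 2" "X_edge n 0 2" by (simp_all add: X_edge_def X_edge0_def)
  have d: "c 0 \<noteq> c 1" "c 1 \<noteq> c 2" "c 0 \<noteq> c 2"
    using adj_diff[OF p V(1) V(2) E(1)] adj_diff[OF p V(2) V(3) E(2)] adj_diff[OF p V(1) V(3) E(3)] by simp_all
  have r: "c 0 \<in> {1..k}" "c 1 \<in> {1..k}" "c 2 \<in> {1..k}" using p V unfolding packing_coloring_def by blast+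
  show False using d r k by auto
qed

lemma Y_low: assumes p: "packing_coloring (Y_verts n) (Y_edge n) k c" shows "3 \<le> k"
proof (rule ccontr)
  assume k: "\<not> 3 \<le> k"
  have V: "0 \<in> Y_verts n" "1 \<in> Y_verts n" "2 \<in> Y_verts n" "3 \<in> Y_verts n" by (auto simp: Y_verts_def)
  have E: "Y_edge n 0 1" "Y_edge n 1 2" "Y_edge n 2 3" "Y_edge n 3 0"
    by (simp_all add: Y_edge_def Y_edge0_def)
  have d: "c 0 \<noteq> c 1" "c 1 \<noteq> c 2" "c 2 \<noteq> c 3" "c 3 \<noteq> c 0"
    using adj_diff[OF p V(1) V(2) E(1)] adj_diff[OF p V(2) V(3) E(2)]
      adj_diff[OF p V(3) V(4) E(3)] adj_diff[OF p V(4) V(1) E(4)] by simp_all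
  have r: "c 0 \<in> {1..k}" "c 1 \<in> {1..k}" "c 2 \<in> {1..k}" "c 3 \<in> {1..k}"
    using p V unfolding packing_coloring_def by blast+
  have e02: "c 0 = c 2 \<Longrightarrow> c 0 = 1"
    by (rule dist2_col[OF p V(1) V(3) V(2) E(1) E(2)]) simp_all
  have e13: "c 1 = c 3 \<Longrightarrow> c 1 = 1"
    by (rule dist2_col[OF p V(2) V(4) V(3) E(2) E(3)]) simp_all
  show False using d r e02 e13 k by auto
qed

theorem mainTheorem5:
  fixes n :: nat
  assumes "n \<ge> 1"
  shows "packing_chromatic (X_verts n) (X_edge n) = 3 \<and>
         packing_chromatic (Y_verts n) (Y_edge n) = 3"
proof
  show "packing_chromatic (X_verts n) (X_edge n) = 3"
    unfolding packing_chromatic_def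
  proof (rule Least_equality)
    show "\<exists>c. packing_coloring (X_verts n) (X_edge n) 3 c" using X_col by blast
    show "\<And>k. \<exists>c. packing_coloring (X_verts n) (X_edge n) k c \<Longrightarrow> 3 \<le> k" using X_low by blast
  qed
  show "packing_chromatic (Y_verts n) (Y_edge n) = 3"
    unfolding packing_chromatic_def
  proof (rule Least_equality)
    show "\<exists>c. packing_coloring (Y_verts n) (Y_edge n) 3 c" using Y_col by blast
    show "\<And>k. \<exists>c. packing_coloring (Y_verts n) (Y_edge n) k c \<Longrightarrow> 3 \<le> k" using Y_low by blast
  qed
qed

end
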